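(* Let $0<\rho<1$ and let $\mathcal{S}=(S_1,\dots,S_m)$ be a collection of $m$ subsets of $[n]$ with $\mathrm{opt}(\mathcal{S})\le k$. Suppose $U_{\mathrm{smpl}}\subseteq[n]$ is obtained by picking each element of $[n]$ independently with probability $p\ge 16\,k\log m/(\rho n)$. Then, with probability $1-1/m^2$, every collection of $k$ sets in $\mathcal{S}$ that covers $U_{\mathrm{smpl}}$ entirely also covers at least $(1-\rho)n$ elements of $[n]$.
   Context: $\mathrm{opt}(\mathcal{S})$ denotes the minimum number of sets of $\mathcal{S}$ whose union is $[n]$. A collection covers a set $U$ if $U$ is contained in the union of its members. *)

theory Defs
  imports "HOL-Probability.Probability" "HOL-Library.Extended_Nat"
begin

text \<open>A set system S_1,...,S_m over the ground set [n] = {1..n}, given as a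
function S indexed by {1..m}. A subcollection is an index set I.\<close>

definition covers :: "(nat \<Rightarrow> nat set) \<Rightarrow> nat set \<Rightarrow> nat set \<Rightarrow> bool" where
  "covers S I U \<longleftrightarrow> U \<subseteq> (\<Union>i\<in>I. S i)"

definition opt :: "nat \<Rightarrow> nat \<Rightarrow> (nat \<Rightarrow> nat set) \<Rightarrow> enat" where
  "opt n m S = (INF I \<in> {I. I \<subseteq> {1..m} \<and> (\<Union>i\<in>I. S i) = {1..n}}. enat (card I))"

definition sample_pmf :: "nat \<Rightarrow> real \<Rightarrow> nat set pmf" where
  "sample_pmf n p =
     map_pmf (\<lambda>f. {x \<in> {1..n}. f x}) (Pi_pmf {1..n} False (\<lambda>_. bernoulli_pmf p))"

end

theory Submission
  imports Defs
begin

lemma avoid_prob: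
  assumes "C \<subseteq> {1..n}" "0 \<le> p" "p \<le> 1"
  shows "measure_pmf.prob (sample_pmf n p) {U. U \<inter> C = {}} = (1 - p) ^ card C"
proof -
  have fin: "finite C" using assms(1) finite_subset by blast
  have "measure_pmf.prob (sample_pmf n p) {U. U \<inter> C = {}}
      = measure_pmf.prob (Pi_pmf {1..n} False (\<lambda>_. bernoulli_pmf p))
          (Pi {1..n} (\<lambda>x. if x \<in> C then {False} else UNIV))"
    unfolding sample_pmf_def measure_map_pmf
    by (rule arg_cong[where f="measure_pmf.prob _"]) (use assms(1) in \<open>auto simp: Pi_def\<close>)
  also have "\<dots> = (\<Prod>x\<in>{1..n}. measure_pmf.prob (bernoulli_pmf p) (if x \<in> C then {False} else UNIV))"
    by (rule measure_Pi_pmf_Pi) simp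
  also have "\<dots> = (\<Prod>x\<in>{1..n}. if x \<in> C then 1 - p else 1)"
    by (rule prod.cong) (use assms in \<open>auto simp: measure_pmf_single\<close>)
  also have "\<dots> = (1 - p) ^ card ({1..n} \<inter> C)"
    by (simp add: prod.If_cases)
  also have "{1..n} \<inter> C = C" using assms(1) by blast
  finally show ?thesis .
qed

lemma count_subsets:
  assumes "m \<ge> 1"
  shows "card {I. I \<subseteq> {1..m::nat} \<and> card I \<le> k} \<le> (k+1) * m ^ k"
proof -
  have eq: "{I. I \<subseteq> {1..m::nat} \<and> card I \<le> k} = (\<Union>j\<in>{..k}. {I. I \<subseteq> {1..m} \<and> card I = j})"
    by auto
  have "card {I. I \<subseteq> {1..m::nat} \<and> card I \<le> k} \<le> (\<Sum>j\<in>{..k}. card {I. I \<subseteq> {1..m} \<and> card I = j})"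
    unfolding eq by (rule card_UN_le) simp
  also have "\<dots> = (\<Sum>j\<in>{..k}. m choose j)"
    by (simp add: n_subsets)
  also have "\<dots> \<le> (\<Sum>j\<in>{..k}. m ^ k)"
  proof (rule sum_mono)
    fix j assume j: "j \<in> {..k}"
    show "m choose j \<le> m ^ k"
    proof (cases "j \<le> m")
      case True
      then have "m choose j \<le> m ^ j" by (rule binomial_le_pow)
      also have "\<dots> \<le> m ^ k" using j assms by (auto intro: power_increasing)
      finally show ?thesis .
    qed (simp add: binomial_eq_0)
  qed
  finally show ?thesis by simp
qed

lemma pow_bound: "(1 - p) ^ c \<le> exp (- p * real c)" if "0 \<le> p" "p \<le> 1" for p :: real
proof -
  have "(1 - p) ^ c \<le> exp (-p) ^ c"
    by (rule power_mono) (use exp_ge_add_one_self[of "-p"] that in auto)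
  also have "\<dots> = exp (- p * real c)" by (simp add: exp_of_nat_mult[symmetric] mult.commute)
  finally show ?thesis .
qed


lemma final_arith:
  fixes m k :: nat assumes "m \<ge> 2" "k \<ge> 1"
  shows "(k+1) * m ^ k * m ^ 2 \<le> m ^ (16*k)"
proof -
  have "k + 1 \<le> 2 ^ k" using less_exp[of k] by (simp add: Suc_le_eq)
  also have "\<dots> \<le> m ^ k" by (rule power_mono) (use assms in auto)
  finally have h: "k+1 \<le> m ^ k" .
  have "(k+1) * m ^ k * m ^ 2 \<le> m ^ k * m ^ k * m ^ 2" using h by (intro mult_right_mono) auto
  also have "\<dots> = m ^ (2*k+2)" by (simp add: power_add[symmetric] mult_2)
  also have "\<dots> \<le> m ^ (16*k)" by (rule power_increasing) (use assms in auto)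
  finally show ?thesis .
qed

theorem lemma3p9:
  fixes n m k :: nat and S :: "nat \<Rightarrow> nat set" and \<rho> p :: real
  assumes "0 < \<rho>" and "\<rho> < 1"
    and "\<And>i. i \<in> {1..m} \<Longrightarrow> S i \<subseteq> {1..n}"
    and "opt n m S \<le> enat k"
    and "0 \<le> p" and "p \<le> 1"
    and "p \<ge> 16 * real k * ln (real m) / (\<rho> * real n)"
  shows "measure_pmf.prob (sample_pmf n p)
           {U. \<forall>I. I \<subseteq> {1..m} \<and> card I \<le> k \<and> covers S I U
                 \<longrightarrow> real (card (\<Union>i\<in>I. S i)) \<ge> (1 - \<rho>) * real n}
         \<ge> 1 - 1 / (real m)^2"
proof -
  let ?M = "sample_pmf n p"
  let ?G = "{U. \<forall>I. I \<subseteq> {1..m} \<and> card I \<le> k \<and> covers S I U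
                 \<longrightarrow> real (card (\<Union>i\<in>I. S i)) \<ge> (1 - \<rho>) * real n}"
  have "opt n m S < enat (Suc k)" using assms(4) by (simp add: le_less_trans)
  then obtain I0 where I0: "I0 \<subseteq> {1..m}" "(\<Union>i\<in>I0. S i) = {1..n}" "card I0 \<le> k"
    unfolding opt_def INF_less_iff by auto
  show ?thesis
  proof (cases "n = 0")
    case True
    then have "?G = UNIV" by auto
    then have "measure_pmf.prob ?M ?G = 1" by simp
    moreover have "1 / (real m)^2 \<ge> 0" by simp
    ultimately show ?thesis by linarith
  next
    case False
    then have "I0 \<noteq> {}" using I0(2) by auto
    moreover have "finite I0" using I0(1) finite_subset by blast
    ultimately have "card I0 \<ge> 1" by (simp add: Suc_leI card_gt_0_iff)
    then have k1: "k \<ge> 1" using I0(3) by simp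
    have m1: "m \<ge> 1" using \<open>I0 \<noteq> {}\<close> I0(1) by auto
    have n0: "n > 0" using False by simp
    show ?thesis
    proof (cases "m = 1")
      case True
      then show ?thesis by simp
    next
      case False
      then have m2: "m \<ge> 2" using m1 by simp
      define B where "B = {I. I \<subseteq> {1..m} \<and> card I \<le> k \<and> real (card (\<Union>i\<in>I. S i)) < (1-\<rho>) * real n}"
      have BA: "B \<subseteq> {I. I \<subseteq> {1..m} \<and> card I \<le> k}" unfolding B_def by auto
      have finB: "finite B"
        by (rule finite_subset[of _ "Pow {1..m}"]) (auto simp: B_def)
      have cardB: "card B \<le> (k+1) * m ^ k"
      proof -
        have "finite {I. I \<subseteq> {1..m} \<and> card I \<le> k}"
          by (rule finite_subset[of _ "Pow {1..m}"]) auto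
        then have "card B \<le> card {I. I \<subseteq> {1..m} \<and> card I \<le> k}" using BA by (rule card_mono)
        then show ?thesis using count_subsets[OF m1, of k] by linarith
      qed
      have compl: "?G = space (measure_pmf ?M) - (\<Union>I\<in>B. {U. covers S I U})"
        by (auto simp: B_def not_le)
      have pr: "p * (\<rho> * real n) \<ge> 16 * real k * ln (real m)"
        using assms(7) assms(1) n0 by (simp add: pos_divide_le_eq)
      have each: "measure_pmf.prob ?M {U. covers S I U} \<le> 1 / real m ^ (16*k)" if IB: "I \<in> B" for I
      proof -
        define C where "C = {1..n} - (\<Union>i\<in>I. S i)"
        have Csub: "C \<subseteq> {1..n}" by (auto simp: C_def)
        have Usub: "(\<Union>i\<in>I. S i) \<subseteq> {1..n}" proof -
          have II: "I \<subseteq> {1..m}" using IB by (simp add: B_def)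
          then show ?thesis using assms(3) by blast
        qed
        have "card C = n - card (\<Union>i\<in>I. S i)"
          unfolding C_def using card_Diff_subset[OF finite_subset[OF Usub] Usub] by simp
        moreover have "card (\<Union>i\<in>I. S i) \<le> n"
          using card_mono[OF _ Usub] by simp
        ultimately have cC: "real (card C) = real n - real (card (\<Union>i\<in>I. S i))" by simp
        have lt: "real (card (\<Union>i\<in>I. S i)) < (1-\<rho>) * real n" using IB by (simp add: B_def)
        have cC2: "real (card C) \<ge> \<rho> * real n" using cC lt by (simp add: algebra_simps)
        have "measure_pmf.prob ?M {U. covers S I U} \<le> measure_pmf.prob ?M {U. U \<inter> C = {}}"
          by (rule measure_pmf.finite_measure_mono) (auto simp: covers_def C_def)
        also have "\<dots> = (1 - p) ^ card C" by (rule avoid_prob[OF Csub assms(5,6)])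
        also have "\<dots> \<le> exp (- p * real (card C))" by (rule pow_bound[OF assms(5,6)])
        also have "\<dots> \<le> exp (- (16 * real k * ln (real m)))"
        proof -
          have "p * (\<rho> * real n) \<le> p * real (card C)" using cC2 assms(5) by (rule mult_left_mono)
          then show ?thesis using pr by simp
        qed
        also have "\<dots> = 1 / real m ^ (16*k)"
        proof -
          have "exp (16 * real k * ln (real m)) = exp (real (16*k) * ln (real m))" by simp
          also have "\<dots> = exp (ln (real m)) ^ (16*k)" by (rule exp_of_nat_mult)
          also have "\<dots> = real m ^ (16*k)" using m1 by simp
          finally show ?thesis by (simp add: exp_minus field_simps)
        qed
        finally show ?thesis .
      qed
      have "measure_pmf.prob ?M (\<Union>I\<in>B. {U. covers S I U}) \<le> (\<Sum>I\<in>B. measure_pmf.prob ?M {U. covers S I U})"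
        by (rule measure_pmf.finite_measure_subadditive_finite) (use finB in auto)
      also have "\<dots> \<le> (\<Sum>I\<in>B. 1 / real m ^ (16*k))" by (rule sum_mono) (rule each)
      also have "\<dots> = real (card B) / real m ^ (16*k)" by simp
      also have "\<dots> \<le> real ((k+1) * m ^ k) / real m ^ (16*k)"
        by (rule divide_right_mono) (use cardB of_nat_mono in \<open>simp_all only:\<close>, simp)
      also have "\<dots> \<le> 1 / (real m)^2"
      proof -
        have "real ((k+1) * m ^ k * m ^ 2) \<le> real (m ^ (16*k))"
          using final_arith[OF m2 k1] by linarith
        then have "real ((k+1) * m ^ k) * (real m)^2 \<le> real m ^ (16*k)" by simp
        then show ?thesis using m1 by (simp add: divide_simps)
      qed
      finally have bad: "measure_pmf.prob ?M (\<Union>I\<in>B. {U. covers S I U}) \<le> 1 / (real m)^2" .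
      have "measure_pmf.prob ?M ?G = 1 - measure_pmf.prob ?M (\<Union>I\<in>B. {U. covers S I U})"
        unfolding compl by (rule measure_pmf.prob_compl) simp
      then show ?thesis using bad by linarith
    qed
  qed
qed

end
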